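(* Let $(u_k)_{k\in\mathbb N}$, with associated $(\tau_k)$, be generated by the proximal-gradient algorithm and assume $\nabla F$ is Lipschitz continuous from $L^2(0,T)$ to $L^2(0,T)$. Let $\bar u\in U_{ad}$ be the weak-$\star$ limit of $(u_k)$ in $\mathrm{BV}(0,T)$. Then for every accumulation point $\bar\tau$ of $(\tau_k)$, $\bar u$ solves \[\min_{u\in U_{ad}}\ F(\bar u)+(\nabla F(\bar u),u-\bar u)_{L^2(0,T)}+\frac{\bar\tau}2\|u-\bar u\|_{L^2(0,T)}^2+\beta\mathrm{TV}(u).\]
   Context: $T>0$, $\beta>0$; $\nu_1<\dots<\nu_d$ are integers. $\mathrm{TV}(u):=\sup\{\int_0^T u\varphi'\,dt : \varphi\in C_c^1(0,T),\ \|\varphi\|_\infty\le 1\}$, $\mathrm{BV}(0,T)=\{u\in L^1(0,T):\mathrm{TV}(u)<\infty\}$. $U_{ad}:=\{u\in L^1(0,T): u(t)\in\{\nu_1,\dots,\nu_d\}\text{ a.e.}\}$. $F:L^1(0,T)\to\mathbb R$ is bounded from below and Gâteaux differentiable on $L^2(0,T)$ with gradient $\nabla F(u)\in L^2(0,T)$. $G(u):=\beta\mathrm{TV}(u)+\delta_{U_{ad}}(u)$ with $\delta_{U_{ad}}$ the indicator ($0$ on $U_{ad}$, $\infty$ elsewhere). Proximal-gradient algorithm: given $u_0\in U_{ad}\cap\mathrm{BV}(0,T)$ and $\eta>0$, for $k=0,1,\dots$ choose $\tau_k>0$ and a solution $u_{k+1}$ of $\min_{u\in L^2(0,T)} F(u_k)+(\nabla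 F(u_k),u-u_k)_{L^2}+\frac{\tau_k}2\|u-u_k\|_{L^2}^2+G(u)$ satisfying $\eta\|u_{k+1}-u_k\|_{L^2}^2\le F(u_k)+\beta\mathrm{TV}(u_k)-(F(u_{k+1})+\beta\mathrm{TV}(u_{k+1}))$. Under these assumptions such a sequence converges weakly-$\star$ in $\mathrm{BV}(0,T)$ to some $\bar u\in U_{ad}$. *)

theory Defs
  imports "HOL-Analysis.Analysis"
begin

text \<open>Functions on (0,T) are represented by real-valued functions on the reals;
  only their values on the open interval (0,T) matter (Lebesgue measure).\<close>

definition L1 :: "real \<Rightarrow> (real \<Rightarrow> real) \<Rightarrow> bool" where
  "L1 T u \<longleftrightarrow> set_integrable lborel {0<..<T} u"

definition L2 :: "real \<Rightarrow> (real \<Rightarrow> real) \<Rightarrow> bool" where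
  "L2 T u \<longleftrightarrow> set_borel_measurable lborel {0<..<T} u
      \<and> set_integrable lborel {0<..<T} (\<lambda>t. (u t)^2)"

definition ipL2 :: "real \<Rightarrow> (real \<Rightarrow> real) \<Rightarrow> (real \<Rightarrow> real) \<Rightarrow> real" where
  "ipL2 T u v = (LINT t:{0<..<T}|lborel. u t * v t)"

definition nrm2L2 :: "real \<Rightarrow> (real \<Rightarrow> real) \<Rightarrow> real" where
  "nrm2L2 T u = ipL2 T u u"

definition nrmL2 :: "real \<Rightarrow> (real \<Rightarrow> real) \<Rightarrow> real" where
  "nrmL2 T u = sqrt (nrm2L2 T u)"

definition Cc1 :: "real \<Rightarrow> (real \<Rightarrow> real) set" where
  "Cc1 T = {\<phi>. (\<exists>\<phi>'. continuous_on UNIV \<phi>' \<and> (\<forall>t. (\<phi> has_real_derivative \<phi>' t) (at t)))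
               \<and> (\<exists>a b. 0 < a \<and> a \<le> b \<and> b < T \<and> (\<forall>t. t \<notin> {a..b} \<longrightarrow> \<phi> t = 0))}"

definition TV :: "real \<Rightarrow> (real \<Rightarrow> real) \<Rightarrow> ereal" where
  "TV T u = (SUP \<phi>\<in>{\<phi>\<in>Cc1 T. \<forall>t. \<bar>\<phi> t\<bar> \<le> 1}.
               ereal (LINT t:{0<..<T}|lborel. u t * deriv \<phi> t))"

definition BV :: "real \<Rightarrow> (real \<Rightarrow> real) \<Rightarrow> bool" where
  "BV T u \<longleftrightarrow> L1 T u \<and> TV T u < \<infinity>"

definition Uad :: "real \<Rightarrow> int set \<Rightarrow> (real \<Rightarrow> real) set" where
  "Uad T V = {u. L1 T u \<and> (AE t in lborel. t \<in> {0<..<T} \<longrightarrow> u t \<in> real_of_int ` V)}"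

definition delta_Uad :: "real \<Rightarrow> int set \<Rightarrow> (real \<Rightarrow> real) \<Rightarrow> ereal" where
  "delta_Uad T V u = (if u \<in> Uad T V then 0 else \<infinity>)"

definition Gfun :: "real \<Rightarrow> real \<Rightarrow> int set \<Rightarrow> (real \<Rightarrow> real) \<Rightarrow> ereal" where
  "Gfun T \<beta> V u = ereal \<beta> * TV T u + delta_Uad T V u"

definition lin_model :: "real \<Rightarrow> ((real \<Rightarrow> real) \<Rightarrow> real) \<Rightarrow> ((real \<Rightarrow> real) \<Rightarrow> (real \<Rightarrow> real))
     \<Rightarrow> (real \<Rightarrow> real) \<Rightarrow> real \<Rightarrow> (real \<Rightarrow> real) \<Rightarrow> real" where
  "lin_model T F gradF w \<tau> v =
     F w + ipL2 T (gradF w) (\<lambda>t. v t - w t) + \<tau> / 2 * nrm2L2 T (\<lambda>t. v t - w t)"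

definition standing :: "real \<Rightarrow> real \<Rightarrow> int set \<Rightarrow> ((real \<Rightarrow> real) \<Rightarrow> real)
     \<Rightarrow> ((real \<Rightarrow> real) \<Rightarrow> (real \<Rightarrow> real)) \<Rightarrow> bool" where
  "standing T \<beta> V F gradF \<longleftrightarrow>
     T > 0 \<and> \<beta> > 0 \<and> finite V \<and> V \<noteq> {}
     \<comment> \<open>F is a map on L1(0,T), i.e. independent of the representative\<close>
     \<and> (\<forall>u v. L1 T u \<longrightarrow> L1 T v \<longrightarrow> (AE t in lborel. t \<in> {0<..<T} \<longrightarrow> u t = v t) \<longrightarrow> F u = F v)
     \<comment> \<open>F bounded from below\<close>
     \<and> (\<exists>c. \<forall>u. L1 T u \<longrightarrow> c \<le> F u)
     \<comment> \<open>Gateaux differentiability on L2 with gradient in L2\<close>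
     \<and> (\<forall>u. L2 T u \<longrightarrow> L2 T (gradF u) \<and>
           (\<forall>v. L2 T v \<longrightarrow>
              ((\<lambda>s. (F (\<lambda>t. u t + s * v t) - F u) / s) \<longlongrightarrow> ipL2 T (gradF u) v) (at 0)))"

definition prox_grad_seq :: "real \<Rightarrow> real \<Rightarrow> int set \<Rightarrow> ((real \<Rightarrow> real) \<Rightarrow> real)
     \<Rightarrow> ((real \<Rightarrow> real) \<Rightarrow> (real \<Rightarrow> real)) \<Rightarrow> real \<Rightarrow> (nat \<Rightarrow> real \<Rightarrow> real) \<Rightarrow> (nat \<Rightarrow> real) \<Rightarrow> bool" where
  "prox_grad_seq T \<beta> V F gradF \<eta> u \<tau> \<longleftrightarrow>
     \<eta> > 0 \<and> u 0 \<in> Uad T V \<and> BV T (u 0) \<and>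
     (\<forall>k. \<tau> k > 0 \<and> L2 T (u (Suc k))
        \<and> (\<forall>v. L2 T v \<longrightarrow>
              ereal (lin_model T F gradF (u k) (\<tau> k) (u (Suc k))) + Gfun T \<beta> V (u (Suc k))
              \<le> ereal (lin_model T F gradF (u k) (\<tau> k) v) + Gfun T \<beta> V v)
        \<and> ereal (\<eta> * nrm2L2 T (\<lambda>t. u (Suc k) t - u k t))
            + (ereal (F (u (Suc k))) + ereal \<beta> * TV T (u (Suc k)))
          \<le> ereal (F (u k)) + ereal \<beta> * TV T (u k))"

text \<open>Weak-star convergence in BV(0,T): convergence in L1 together with a uniform bound
  on the total variations (standard characterisation).\<close>
definition wstar_conv_BV :: "real \<Rightarrow> (nat \<Rightarrow> real \<Rightarrow> real) \<Rightarrow> (real \<Rightarrow> real) \<Rightarrow> bool" where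
  "wstar_conv_BV T us ubar \<longleftrightarrow>
     (\<forall>k. BV T (us k)) \<and> BV T ubar
     \<and> ((\<lambda>k. LINT t:{0<..<T}|lborel. \<bar>us k t - ubar t\<bar>) \<longlonglongrightarrow> 0)
     \<and> (\<exists>C. \<forall>k. TV T (us k) \<le> ereal C)"

end

theory Submission
  imports Defs
begin


definition L2M :: "'a measure \<Rightarrow> ('a \<Rightarrow> real) \<Rightarrow> bool" where
  "L2M M f \<longleftrightarrow> f \<in> borel_measurable M \<and> integrable M (\<lambda>x. (f x)^2)"

lemma L2M_prod: assumes "L2M M f" "L2M M g" shows "integrable M (\<lambda>x. f x * g x)"
proof -
  have i: "integrable M (\<lambda>x. (f x)^2 + (g x)^2)" using assms unfolding L2M_def by auto
  have m: "(\<lambda>x. f x * g x) \<in> borel_measurable M" using assms unfolding L2M_def by auto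
  have b: "AE x in M. norm (f x * g x) \<le> norm ((f x)^2 + (g x)^2)"
  proof (rule AE_I2)
    fix x
    have "0 \<le> (\<bar>f x\<bar> - \<bar>g x\<bar>)^2" by simp
    then have "2 * \<bar>f x\<bar> * \<bar>g x\<bar> \<le> (f x)^2 + (g x)^2" by (simp add: power2_eq_square algebra_simps)
    moreover have "\<bar>f x * g x\<bar> \<le> 2 * \<bar>f x\<bar> * \<bar>g x\<bar>" by (simp add: abs_mult)
    moreover have "\<bar>(f x)^2 + (g x)^2\<bar> = (f x)^2 + (g x)^2" by simp
    ultimately show "norm (f x * g x) \<le> norm ((f x)^2 + (g x)^2)"
      unfolding real_norm_def by linarith
  qed
  show ?thesis by (rule Bochner_Integration.integrable_bound[OF i m b])
qed

lemma L2M_diff: assumes "L2M M f" "L2M M g" shows "L2M M (\<lambda>x. f x - g x)"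
proof -
  have "integrable M (\<lambda>x. (f x)^2 - 2 * (f x * g x) + (g x)^2)"
    using assms L2M_prod[OF assms] unfolding L2M_def by auto
  moreover have "(\<lambda>x. (f x)^2 - 2 * (f x * g x) + (g x)^2) = (\<lambda>x. (f x - g x)^2)"
    by (simp add: power2_eq_square algebra_simps)
  ultimately show ?thesis using assms unfolding L2M_def by auto
qed

lemma real_cs_aux:
  fixes A B P :: real
  assumes "A \<ge> 0" "B \<ge> 0" "P \<ge> 0" "\<And>a. a > 0 \<Longrightarrow> 2 * P \<le> a * A + B / a"
  shows "P \<le> sqrt A * sqrt B"
proof (cases "A > 0 \<and> B > 0")
  case True
  define a where "a = sqrt B / sqrt A"
  have ap: "a > 0" using True by (simp add: a_def)
  have sA: "sqrt A * sqrt A = A" "sqrt B * sqrt B = B" using assms by simp_all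
  have nz: "sqrt A \<noteq> 0" using True by simp
  have "a * A = sqrt A * sqrt B" unfolding a_def
  proof -
    have "sqrt B / sqrt A * A = sqrt B / sqrt A * (sqrt A * sqrt A)" using sA by simp
    also have "\<dots> = sqrt A * sqrt B" using nz by (simp add: field_simps)
    finally show "sqrt B / sqrt A * A = sqrt A * sqrt B" .
  qed
  moreover have "B / a = sqrt A * sqrt B" unfolding a_def
  proof -
    have "B / (sqrt B / sqrt A) = (sqrt B * sqrt B) / (sqrt B / sqrt A)" using sA by simp
    also have "\<dots> = sqrt A * sqrt B" using nz True by (simp add: field_simps)
    finally show "B / (sqrt B / sqrt A) = sqrt A * sqrt B" .
  qed
  ultimately show ?thesis using assms(4)[OF ap] by simp
next
  case False
  show ?thesis
  proof (rule ccontr)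
    assume c: "\<not> P \<le> sqrt A * sqrt B"
    from False assms have "A = 0 \<or> B = 0" by auto
    then have Pp: "P > 0" using c by auto
    show False
    proof (cases "A = 0")
      case True
      define a where "a = (B + 1) / P"
      have ap: "a > 0" using Pp assms by (simp add: a_def)
      have "B / a = B * P / (B + 1)" using Pp assms by (simp add: a_def)
      also have "\<dots> < P" using Pp assms by (simp add: field_simps)
      finally show False using assms(4)[OF ap] True Pp by simp
    next
      case False
      then have B0: "B = 0" using \<open>A = 0 \<or> B = 0\<close> by simp
      define a where "a = P / (A + 1)"
      have ap: "a > 0" using Pp assms by (simp add: a_def)
      have "a * A = A * P / (A + 1)" using Pp assms by (simp add: a_def)
      also have "\<dots> < P" using Pp assms by (simp add: field_simps)
      finally show False using assms(4)[OF ap] B0 Pp by simp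
    qed
  qed
qed

lemma L2M_cs: assumes "L2M M f" "L2M M g"
  shows "\<bar>integral\<^sup>L M (\<lambda>x. f x * g x)\<bar> \<le> sqrt (integral\<^sup>L M (\<lambda>x. (f x)^2)) * sqrt (integral\<^sup>L M (\<lambda>x. (g x)^2))"
proof -
  have ip: "integrable M (\<lambda>x. f x * g x)" by (rule L2M_prod[OF assms])
  have i1: "integrable M (\<lambda>x. (f x)^2)" "integrable M (\<lambda>x. (g x)^2)" using assms unfolding L2M_def by auto
  have "\<bar>integral\<^sup>L M (\<lambda>x. f x * g x)\<bar> \<le> integral\<^sup>L M (\<lambda>x. \<bar>f x * g x\<bar>)"
    by (rule integral_abs_bound)
  also have "\<dots> \<le> sqrt (integral\<^sup>L M (\<lambda>x. (f x)^2)) * sqrt (integral\<^sup>L M (\<lambda>x. (g x)^2))"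
  proof (rule real_cs_aux)
    show "0 \<le> integral\<^sup>L M (\<lambda>x. (f x)^2)" by simp
    show "0 \<le> integral\<^sup>L M (\<lambda>x. (g x)^2)" by simp
    show "0 \<le> integral\<^sup>L M (\<lambda>x. \<bar>f x * g x\<bar>)" by simp
    fix a :: real assume a: "a > 0"
    have "integral\<^sup>L M (\<lambda>x. 2 * \<bar>f x * g x\<bar>) \<le> integral\<^sup>L M (\<lambda>x. a * (f x)^2 + (g x)^2 / a)"
    proof (rule integral_mono)
      show "integrable M (\<lambda>x. 2 * \<bar>f x * g x\<bar>)" using ip by auto
      show "integrable M (\<lambda>x. a * (f x)^2 + (g x)^2 / a)" using i1 by auto
      fix x
      have "0 \<le> (a * \<bar>f x\<bar> - \<bar>g x\<bar>)^2" by simp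
      then have "2 * a * \<bar>f x\<bar> * \<bar>g x\<bar> \<le> a * a * (f x)^2 + (g x)^2"
        by (simp add: power2_eq_square algebra_simps)
      then have "a * (2 * \<bar>f x * g x\<bar>) \<le> a * (a * (f x)^2 + (g x)^2 / a)"
        using a by (simp add: abs_mult algebra_simps power2_eq_square)
      then show "2 * \<bar>f x * g x\<bar> \<le> a * (f x)^2 + (g x)^2 / a"
        using a by (simp add: mult_le_cancel_left_pos)
    qed
    then show "2 * integral\<^sup>L M (\<lambda>x. \<bar>f x * g x\<bar>) \<le> a * integral\<^sup>L M (\<lambda>x. (f x)^2) + integral\<^sup>L M (\<lambda>x. (g x)^2) / a"
      using i1 ip by simp
  qed
  finally show ?thesis .
qed


lemma L2M_ip_cont:
  assumes a: "\<And>k. L2M M (a k)" "L2M M a0" and b: "\<And>k. L2M M (b k)" "L2M M b0"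
    and ca: "(\<lambda>k. integral\<^sup>L M (\<lambda>x. (a k x - a0 x)^2)) \<longlonglongrightarrow> 0"
    and cb: "(\<lambda>k. integral\<^sup>L M (\<lambda>x. (b k x - b0 x)^2)) \<longlonglongrightarrow> 0"
  shows "(\<lambda>k. integral\<^sup>L M (\<lambda>x. a k x * b k x)) \<longlonglongrightarrow> integral\<^sup>L M (\<lambda>x. a0 x * b0 x)"
proof -
  define da where "da k = (\<lambda>x. a k x - a0 x)" for k
  define db where "db k = (\<lambda>x. b k x - b0 x)" for k
  have Lda: "L2M M (da k)" for k unfolding da_def using a by (intro L2M_diff) auto
  have Ldb: "L2M M (db k)" for k unfolding db_def using b by (intro L2M_diff) auto
  define s where "s k = sqrt (integral\<^sup>L M (\<lambda>x. (da k x)^2)) * sqrt (integral\<^sup>L M (\<lambda>x. (db k x)^2))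
     + sqrt (integral\<^sup>L M (\<lambda>x. (a0 x)^2)) * sqrt (integral\<^sup>L M (\<lambda>x. (db k x)^2))
     + sqrt (integral\<^sup>L M (\<lambda>x. (da k x)^2)) * sqrt (integral\<^sup>L M (\<lambda>x. (b0 x)^2))" for k
  have A: "(\<lambda>k. sqrt (integral\<^sup>L M (\<lambda>x. (da k x)^2))) \<longlonglongrightarrow> 0"
    using tendsto_real_sqrt[OF ca] unfolding da_def by simp
  have B: "(\<lambda>k. sqrt (integral\<^sup>L M (\<lambda>x. (db k x)^2))) \<longlonglongrightarrow> 0"
    using tendsto_real_sqrt[OF cb] unfolding db_def by simp
  have s0: "s \<longlonglongrightarrow> 0" unfolding s_def
    using tendsto_add[OF tendsto_add[OF tendsto_mult[OF A B] tendsto_mult[OF tendsto_const B]] tendsto_mult[OF A tendsto_const]]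
    by simp
  have eq: "integral\<^sup>L M (\<lambda>x. a k x * b k x) - integral\<^sup>L M (\<lambda>x. a0 x * b0 x) =
      integral\<^sup>L M (\<lambda>x. da k x * db k x) + integral\<^sup>L M (\<lambda>x. a0 x * db k x) + integral\<^sup>L M (\<lambda>x. da k x * b0 x)" for k
  proof -
    have i1: "integrable M (\<lambda>x. da k x * db k x)" by (rule L2M_prod[OF Lda Ldb])
    have i2: "integrable M (\<lambda>x. a0 x * db k x)" by (rule L2M_prod[OF a(2) Ldb])
    have i3: "integrable M (\<lambda>x. da k x * b0 x)" by (rule L2M_prod[OF Lda b(2)])
    have i0: "integrable M (\<lambda>x. a0 x * b0 x)" by (rule L2M_prod[OF a(2) b(2)])
    have "(\<lambda>x. a k x * b k x) = (\<lambda>x. ((da k x * db k x + a0 x * db k x) + da k x * b0 x) + a0 x * b0 x)"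
      unfolding da_def db_def by (auto simp: algebra_simps)
    then have "integral\<^sup>L M (\<lambda>x. a k x * b k x) = integral\<^sup>L M (\<lambda>x. da k x * db k x) + integral\<^sup>L M (\<lambda>x. a0 x * db k x) + integral\<^sup>L M (\<lambda>x. da k x * b0 x) + integral\<^sup>L M (\<lambda>x. a0 x * b0 x)"
      using i0 i1 i2 i3 by simp
    then show ?thesis by simp
  qed
  have bd: "norm (integral\<^sup>L M (\<lambda>x. a k x * b k x) - integral\<^sup>L M (\<lambda>x. a0 x * b0 x)) \<le> s k" for k
  proof -
    have "norm (integral\<^sup>L M (\<lambda>x. a k x * b k x) - integral\<^sup>L M (\<lambda>x. a0 x * b0 x))
       \<le> \<bar>integral\<^sup>L M (\<lambda>x. da k x * db k x)\<bar> + \<bar>integral\<^sup>L M (\<lambda>x. a0 x * db k x)\<bar> + \<bar>integral\<^sup>L M (\<lambda>x. da k x * b0 x)\<bar>"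
      unfolding eq by simp
    also have "\<dots> \<le> s k" unfolding s_def
      using L2M_cs[OF Lda[of k] Ldb[of k]] L2M_cs[OF a(2) Ldb, of k] L2M_cs[OF Lda b(2), of k]
      by linarith
    finally show ?thesis .
  qed
  have "(\<lambda>k. integral\<^sup>L M (\<lambda>x. a k x * b k x) - integral\<^sup>L M (\<lambda>x. a0 x * b0 x)) \<longlonglongrightarrow> 0"
    by (rule Lim_null_comparison[OF always_eventually s0]) (intro allI bd)
  then show ?thesis by (simp add: LIM_zero_iff)
qed

lemma L2M_bdd_diff:
  assumes f: "L2M M f" and g: "L2M M g" and B: "AE x in M. \<bar>f x\<bar> \<le> C" "AE x in M. \<bar>g x\<bar> \<le> C"
    and i: "integrable M (\<lambda>x. \<bar>f x - g x\<bar>)"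
  shows "integral\<^sup>L M (\<lambda>x. (f x - g x)^2) \<le> 2 * C * integral\<^sup>L M (\<lambda>x. \<bar>f x - g x\<bar>)"
proof -
  have d: "L2M M (\<lambda>x. f x - g x)" by (rule L2M_diff[OF f g])
  have "integral\<^sup>L M (\<lambda>x. (f x - g x)^2) \<le> integral\<^sup>L M (\<lambda>x. 2 * C * \<bar>f x - g x\<bar>)"
  proof (rule integral_mono_AE)
    show "integrable M (\<lambda>x. (f x - g x)^2)" using d unfolding L2M_def by auto
    show "integrable M (\<lambda>x. 2 * C * \<bar>f x - g x\<bar>)" using i by auto
    show "AE x in M. (f x - g x)^2 \<le> 2 * C * \<bar>f x - g x\<bar>"
      using B
    proof eventually_elim
      case (elim x)
      have "\<bar>f x - g x\<bar> \<le> 2 * C" using elim by linarith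
      then have "\<bar>f x - g x\<bar> * \<bar>f x - g x\<bar> \<le> 2 * C * \<bar>f x - g x\<bar>"
        by (rule mult_right_mono) auto
      then show ?case by (metis abs_mult_self_eq power2_eq_square)
    qed
  qed
  also have "\<dots> = 2 * C * integral\<^sup>L M (\<lambda>x. \<bar>f x - g x\<bar>)" by simp
  finally show ?thesis .
qed



abbreviation NN :: "real \<Rightarrow> real measure" where
  "NN T \<equiv> restrict_space lborel {0<..<T}"

lemma Sset: "{0<..<(T::real)} \<inter> space lborel \<in> sets lborel" by simp

lemma L1_iff: "L1 T u \<longleftrightarrow> integrable (NN T) u"
  unfolding L1_def set_integrable_def by (subst integrable_restrict_space[OF Sset]) simp

lemma sint_eq: "(LINT t:{0<..<T}|lborel. f t) = integral\<^sup>L (NN T) (f::real\<Rightarrow>real)"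
  unfolding set_lebesgue_integral_def using integral_restrict_space[OF Sset, of T f] by simp

lemma L2_iff: "L2 T u \<longleftrightarrow> L2M (NN T) u"
  unfolding L2_def L2M_def set_integrable_def set_borel_measurable_def
  by (subst integrable_restrict_space[OF Sset], subst borel_measurable_restrict_space_iff[OF Sset]) simp

lemma ip_eq: "ipL2 T f g = integral\<^sup>L (NN T) (\<lambda>t. f t * g t)"
  unfolding ipL2_def sint_eq ..

lemma n2_eq: "nrm2L2 T f = integral\<^sup>L (NN T) (\<lambda>t. (f t)^2)"
  unfolding nrm2L2_def ip_eq by (simp add: power2_eq_square)

lemma AE_iff: "(AE t in NN T. P t) \<longleftrightarrow> (AE t in lborel. t \<in> {0<..<T} \<longrightarrow> P t)"
  using AE_restrict_space_iff[OF Sset] .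

lemma Uad_bound:
  assumes "u \<in> Uad T V" "finite V"
  shows "AE t in NN T. \<bar>u t\<bar> \<le> (\<Sum>x\<in>V. \<bar>real_of_int x\<bar>)"
proof -
  have "AE t in NN T. u t \<in> real_of_int ` V" using assms unfolding Uad_def AE_iff by auto
  then show ?thesis
  proof eventually_elim
    case (elim t)
    then obtain x where x: "x \<in> V" "u t = real_of_int x" by auto
    have "\<bar>real_of_int x\<bar> \<le> (\<Sum>x\<in>V. \<bar>real_of_int x\<bar>)"
      by (rule member_le_sum) (use x assms in auto)
    then show ?case using x by simp
  qed
qed

lemma Uad_L2M:
  assumes "u \<in> Uad T V" "finite V"
  shows "L2M (NN T) u"
proof -
  define C where "C = (\<Sum>x\<in>V. \<bar>real_of_int x\<bar>)"
  have C0: "C \<ge> 0" unfolding C_def by (rule sum_nonneg) auto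
  have i: "integrable (NN T) u" using assms unfolding Uad_def L1_iff by auto
  then have m: "u \<in> borel_measurable (NN T)" by auto
  have ib: "integrable (NN T) (\<lambda>t. C * u t)" using i by auto
  have "AE t in NN T. norm ((u t)^2) \<le> norm (C * u t)"
    using Uad_bound[OF assms]
  proof eventually_elim
    case (elim t)
    then have "\<bar>u t\<bar> * \<bar>u t\<bar> \<le> C * \<bar>u t\<bar>" unfolding C_def by (intro mult_right_mono) auto
    then show ?case using C0 by (simp add: power2_eq_square abs_mult)
  qed
  then have "integrable (NN T) (\<lambda>t. (u t)^2)"
    by (intro Bochner_Integration.integrable_bound[OF ib]) (use m in auto)
  then show ?thesis unfolding L2M_def using m by auto
qed

lemma TV_nonneg: assumes "T > 0" shows "0 \<le> TV T u"
proof -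
  have "(\<lambda>_. 0::real) \<in> {\<phi>\<in>Cc1 T. \<forall>t. \<bar>\<phi> t\<bar> \<le> 1}"
    unfolding Cc1_def
    apply (auto intro!: exI[of _ "\<lambda>_. 0"] exI[of _ "T/2"])
    using assms by auto
  from SUP_upper[OF this, of "\<lambda>\<phi>. ereal (LINT t:{0<..<T}|lborel. u t * deriv \<phi> t)"]
  show ?thesis unfolding TV_def by (simp add: zero_ereal_def)
qed

lemma TV_ge: assumes "\<phi> \<in> Cc1 T" "\<forall>t. \<bar>\<phi> t\<bar> \<le> 1"
  shows "ereal (LINT t:{0<..<T}|lborel. u t * deriv \<phi> t) \<le> TV T u"
  unfolding TV_def by (rule SUP_upper) (use assms in auto)

lemma TV_le: assumes "\<And>\<phi>. \<phi> \<in> Cc1 T \<Longrightarrow> \<forall>t. \<bar>\<phi> t\<bar> \<le> 1 \<Longrightarrow> (LINT t:{0<..<T}|lborel. u t * deriv \<phi> t) \<le> X"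
  shows "TV T u \<le> ereal X"
  unfolding TV_def by (rule SUP_least) (use assms in auto)

lemma Cc1_bound:
  assumes "\<phi> \<in> Cc1 T"
  shows "\<exists>B. deriv \<phi> \<in> borel_measurable borel \<and> (\<forall>t\<in>{0..T}. \<bar>deriv \<phi> t\<bar> \<le> B)"
proof -
  obtain \<phi>' where c: "continuous_on UNIV \<phi>'" and d: "\<And>t. (\<phi> has_real_derivative \<phi>' t) (at t)"
    using assms unfolding Cc1_def by auto
  have e: "deriv \<phi> = \<phi>'" using d by (auto intro!: DERIV_imp_deriv)
  have "compact (\<phi>' ` {0..T})"
    by (rule compact_continuous_image) (use c continuous_on_subset in auto)
  then have "bounded (\<phi>' ` {0..T})" by (rule compact_imp_bounded)
  then obtain B where "\<forall>x\<in>\<phi>' ` {0..T}. \<bar>x\<bar> \<le> B" unfolding bounded_real by auto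
  then show ?thesis using e borel_measurable_continuous_onI[OF c] by auto
qed

lemma Cc1_conv:
  assumes "\<phi> \<in> Cc1 T" and i: "\<And>k. integrable (NN T) (w k)" "integrable (NN T) w0"
    and c: "(\<lambda>k. integral\<^sup>L (NN T) (\<lambda>t. \<bar>w k t - w0 t\<bar>)) \<longlonglongrightarrow> 0"
  shows "(\<lambda>k. integral\<^sup>L (NN T) (\<lambda>t. w k t * deriv \<phi> t)) \<longlonglongrightarrow> integral\<^sup>L (NN T) (\<lambda>t. w0 t * deriv \<phi> t)"
proof -
  obtain B where m: "deriv \<phi> \<in> borel_measurable borel" and B: "\<forall>t\<in>{0..T}. \<bar>deriv \<phi> t\<bar> \<le> B"
    using Cc1_bound[OF assms(1)] by auto
  have mN: "deriv \<phi> \<in> borel_measurable (NN T)" using m by (intro measurable_restrict_space1) simp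
  have Bae: "AE t in NN T. \<bar>deriv \<phi> t\<bar> \<le> B" unfolding AE_iff using B by auto
  have int: "integrable (NN T) (\<lambda>t. f t * deriv \<phi> t)" if f: "integrable (NN T) f" for f
  proof -
    have "integrable (NN T) (\<lambda>t. B * f t)" using f by auto
    moreover have "(\<lambda>t. f t * deriv \<phi> t) \<in> borel_measurable (NN T)" using f mN by auto
    moreover have "AE t in NN T. norm (f t * deriv \<phi> t) \<le> norm (B * f t)"
      using Bae
    proof eventually_elim
      case (elim t)
      then have "\<bar>f t\<bar> * \<bar>deriv \<phi> t\<bar> \<le> \<bar>f t\<bar> * B" by (intro mult_left_mono) auto
      moreover have "B \<ge> 0" using elim by linarith
      ultimately show ?case by (simp add: abs_mult mult.commute)
    qed
    ultimately show ?thesis by (rule Bochner_Integration.integrable_bound)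
  qed
  have bd: "norm (integral\<^sup>L (NN T) (\<lambda>t. w k t * deriv \<phi> t) - integral\<^sup>L (NN T) (\<lambda>t. w0 t * deriv \<phi> t))
      \<le> B * integral\<^sup>L (NN T) (\<lambda>t. \<bar>w k t - w0 t\<bar>)" for k
  proof -
    have iw: "integrable (NN T) (\<lambda>t. w k t - w0 t)" using i by auto
    have "integral\<^sup>L (NN T) (\<lambda>t. w k t * deriv \<phi> t) - integral\<^sup>L (NN T) (\<lambda>t. w0 t * deriv \<phi> t)
        = integral\<^sup>L (NN T) (\<lambda>t. (w k t - w0 t) * deriv \<phi> t)"
      using int[OF i(1)] int[OF i(2)] by (simp add: left_diff_distrib)
    also have "norm \<dots> \<le> integral\<^sup>L (NN T) (\<lambda>t. B * \<bar>w k t - w0 t\<bar>)"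
    proof -
      have "norm (integral\<^sup>L (NN T) (\<lambda>t. (w k t - w0 t) * deriv \<phi> t)) \<le> integral\<^sup>L (NN T) (\<lambda>t. norm ((w k t - w0 t) * deriv \<phi> t))"
        by (rule integral_norm_bound)
      also have "\<dots> \<le> integral\<^sup>L (NN T) (\<lambda>t. B * \<bar>w k t - w0 t\<bar>)"
      proof (rule integral_mono_AE)
        show "integrable (NN T) (\<lambda>t. norm ((w k t - w0 t) * deriv \<phi> t))" using int[OF iw] by auto
        show "integrable (NN T) (\<lambda>t. B * \<bar>w k t - w0 t\<bar>)" using iw by auto
        show "AE t in NN T. norm ((w k t - w0 t) * deriv \<phi> t) \<le> B * \<bar>w k t - w0 t\<bar>"
          using Bae
        proof eventually_elim
          case (elim t)
          then have "\<bar>w k t - w0 t\<bar> * \<bar>deriv \<phi> t\<bar> \<le> \<bar>w k t - w0 t\<bar> * B" by (intro mult_left_mono) auto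
          then show ?case by (simp add: abs_mult mult.commute)
        qed
      qed
      finally show ?thesis .
    qed
    also have "\<dots> = B * integral\<^sup>L (NN T) (\<lambda>t. \<bar>w k t - w0 t\<bar>)" by simp
    finally show ?thesis .
  qed
  have l0: "(\<lambda>k. B * integral\<^sup>L (NN T) (\<lambda>t. \<bar>w k t - w0 t\<bar>)) \<longlonglongrightarrow> B * 0"
    by (intro tendsto_mult tendsto_const c)
  have "(\<lambda>k. integral\<^sup>L (NN T) (\<lambda>t. w k t * deriv \<phi> t) - integral\<^sup>L (NN T) (\<lambda>t. w0 t * deriv \<phi> t)) \<longlonglongrightarrow> 0"
  proof (rule Lim_null_comparison)
    show "(\<lambda>k. B * integral\<^sup>L (NN T) (\<lambda>t. \<bar>w k t - w0 t\<bar>)) \<longlonglongrightarrow> 0" using l0 by simp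
    show "\<forall>\<^sub>F k in sequentially. norm (integral\<^sup>L (NN T) (\<lambda>t. w k t * deriv \<phi> t) - integral\<^sup>L (NN T) (\<lambda>t. w0 t * deriv \<phi> t)) \<le> B * integral\<^sup>L (NN T) (\<lambda>t. \<bar>w k t - w0 t\<bar>)"
      by (intro always_eventually allI bd)
  qed
  then show ?thesis by (simp add: LIM_zero_iff)
qed



lemma TV_real: assumes "T > 0" "TV T w < \<infinity>" shows "TV T w = ereal (real_of_ereal (TV T w))" "real_of_ereal (TV T w) \<ge> 0"
proof -
  have "0 \<le> TV T w" using TV_nonneg[OF assms(1)] .
  then show "TV T w = ereal (real_of_ereal (TV T w))" using assms(2) by (cases "TV T w") auto
  show "real_of_ereal (TV T w) \<ge> 0" using \<open>0 \<le> TV T w\<close> by (simp add: real_of_ereal_pos)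
qed

lemma ineq_real:
  assumes "ereal a + Gfun T \<beta> V w \<le> ereal b + Gfun T \<beta> V v" "v \<in> Uad T V"
    "TV T v = ereal tv" "TV T w = ereal tw"
  shows "w \<in> Uad T V \<and> a + \<beta> * tw \<le> b + \<beta> * tv"
proof (cases "w \<in> Uad T V")
  case True
  then show ?thesis using assms unfolding Gfun_def delta_Uad_def by simp
next
  case False
  have "Gfun T \<beta> V w = \<infinity>" unfolding Gfun_def delta_Uad_def using False assms(4) by simp
  then have "ereal a + Gfun T \<beta> V w = \<infinity>" by simp
  moreover have "ereal b + Gfun T \<beta> V v = ereal (b + \<beta> * tv)"
    unfolding Gfun_def delta_Uad_def using assms(2,3) by simp
  ultimately show ?thesis using assms(1) by simp
qed


theorem theorem4p2:
  fixes T \<beta> \<eta> :: real and V :: "int set"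
    and F :: "(real \<Rightarrow> real) \<Rightarrow> real" and gradF :: "(real \<Rightarrow> real) \<Rightarrow> (real \<Rightarrow> real)"
    and u :: "nat \<Rightarrow> real \<Rightarrow> real" and \<tau> :: "nat \<Rightarrow> real"
    and ubar :: "real \<Rightarrow> real" and taubar :: real
  assumes "standing T \<beta> V F gradF"
    and "prox_grad_seq T \<beta> V F gradF \<eta> u \<tau>"
    and "\<exists>L. \<forall>v w. L2 T v \<longrightarrow> L2 T w \<longrightarrow>
            nrmL2 T (\<lambda>t. gradF v t - gradF w t) \<le> L * nrmL2 T (\<lambda>t. v t - w t)"
    and "ubar \<in> Uad T V"
    and "wstar_conv_BV T u ubar"
    and "\<exists>r. strict_mono r \<and> (\<tau> \<circ> r) \<longlonglongrightarrow> taubar"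
  shows "ubar \<in> Uad T V \<and>
         (\<forall>v\<in>Uad T V.
            ereal (lin_model T F gradF ubar taubar ubar) + ereal \<beta> * TV T ubar
            \<le> ereal (lin_model T F gradF ubar taubar v) + ereal \<beta> * TV T v)"
proof -
  note st = assms(1)[unfolded standing_def]
  note pg = assms(2)[unfolded prox_grad_seq_def]
  note ws = assms(5)[unfolded wstar_conv_BV_def]
  have T0: "T > 0" using st by (rule conjunct1)
  have b0: "\<beta> > 0" using st[THEN conjunct2] by (rule conjunct1)
  have fV: "finite V" using st[THEN conjunct2, THEN conjunct2] by (rule conjunct1)
  note gr = st[THEN conjunct2, THEN conjunct2, THEN conjunct2, THEN conjunct2, THEN conjunct2, THEN conjunct2]
  have gradL2: "L2 T (gradF w)" if "L2 T w" for w using gr[rule_format, OF that] by (rule conjunct1)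
  have u0: "u 0 \<in> Uad T V" using pg[THEN conjunct2] by (rule conjunct1)
  note pall = pg[THEN conjunct2, THEN conjunct2, THEN conjunct2]
  have tpos: "\<tau> k > 0" for k using pall[rule_format, of k] by (rule conjunct1)
  have minq: "ereal (lin_model T F gradF (u k) (\<tau> k) (u (Suc k))) + Gfun T \<beta> V (u (Suc k))
              \<le> ereal (lin_model T F gradF (u k) (\<tau> k) w) + Gfun T \<beta> V w" if "L2 T w" for k w
    using pall[rule_format, of k, THEN conjunct2, THEN conjunct2, THEN conjunct1, rule_format, OF that] .
  from assms(3) obtain L where Lip0: "\<forall>v w. L2 T v \<longrightarrow> L2 T w \<longrightarrow>
            nrmL2 T (\<lambda>t. gradF v t - gradF w t) \<le> L * nrmL2 T (\<lambda>t. v t - w t)" ..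
  note Lip = Lip0[rule_format]
  from assms(6) obtain r where r0: "strict_mono r \<and> (\<tau> \<circ> r) \<longlonglongrightarrow> taubar" ..
  have r: "strict_mono r" "(\<tau> \<circ> r) \<longlonglongrightarrow> taubar" using r0 by auto
  have ub: "ubar \<in> Uad T V" by fact
  have BVu: "BV T (u k)" for k using ws[THEN conjunct1] by simp
  have BVb: "BV T ubar" using ws[THEN conjunct2] by (rule conjunct1)
  have L1conv: "(\<lambda>k. LINT t:{0<..<T}|lborel. \<bar>u k t - ubar t\<bar>) \<longlonglongrightarrow> 0"
    using ws[THEN conjunct2, THEN conjunct2] by (rule conjunct1)
  define tv where "tv k = real_of_ereal (TV T (u k))" for k
  have tvk: "TV T (u k) = ereal (tv k)" for k unfolding tv_def
    using TV_real(1)[OF T0] BVu[of k] unfolding BV_def by auto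
  define tvb where "tvb = real_of_ereal (TV T ubar)"
  have tvbar: "TV T ubar = ereal tvb" unfolding tvb_def
    using TV_real(1)[OF T0] BVb unfolding BV_def by auto
  have L2ub: "L2 T ubar" unfolding L2_iff by (rule Uad_L2M[OF ub fV])
  have uU: "u k \<in> Uad T V" for k
  proof (cases k)
    case 0 then show ?thesis using u0 by simp
  next
    case (Suc j)
    from ineq_real[OF minq[OF L2ub, of j] ub tvbar tvk[of "Suc j"]] show ?thesis using Suc by simp
  qed
  define C where "C = (\<Sum>x\<in>V. \<bar>real_of_int x\<bar>)"
  have Cb: "AE t in NN T. \<bar>u k t\<bar> \<le> C" for k unfolding C_def by (rule Uad_bound[OF uU fV])
  have Cbb: "AE t in NN T. \<bar>ubar t\<bar> \<le> C" unfolding C_def by (rule Uad_bound[OF ub fV])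
  have C0: "C \<ge> 0" unfolding C_def by (rule sum_nonneg) auto
  have L2u: "L2M (NN T) (u k)" for k by (rule Uad_L2M[OF uU fV])
  have L2b: "L2M (NN T) ubar" by (rule Uad_L2M[OF ub fV])
  have iu: "integrable (NN T) (u k)" for k using uU[of k] unfolding Uad_def L1_iff by auto
  have ib: "integrable (NN T) ubar" using ub unfolding Uad_def L1_iff by auto
  define g where "g k = gradF (u k)" for k
  define gb where "gb = gradF ubar"
  have L2g: "L2M (NN T) (g k)" for k unfolding g_def L2_iff[symmetric] by (rule gradL2) (simp add: L2_iff L2u)
  have L2gb: "L2M (NN T) gb" unfolding gb_def L2_iff[symmetric] by (rule gradL2[OF L2ub])
  define e where "e k = integral\<^sup>L (NN T) (\<lambda>t. \<bar>u k t - ubar t\<bar>)" for k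
  have e0: "e \<longlonglongrightarrow> 0" using L1conv unfolding e_def sint_eq .
  have enn: "e k \<ge> 0" for k unfolding e_def by simp
  have Du: "(\<lambda>k. integral\<^sup>L (NN T) (\<lambda>t. (u k t - ubar t)^2)) \<longlonglongrightarrow> 0"
  proof (rule Lim_null_comparison)
    have "(\<lambda>k. 2 * C * e k) \<longlonglongrightarrow> 2 * C * 0" by (intro tendsto_intros e0)
    then show "(\<lambda>k. 2 * C * e k) \<longlonglongrightarrow> 0" by simp
    show "\<forall>\<^sub>F k in sequentially. norm (integral\<^sup>L (NN T) (\<lambda>t. (u k t - ubar t)^2)) \<le> 2 * C * e k"
    proof (rule always_eventually, rule allI)
      fix k
      have "integral\<^sup>L (NN T) (\<lambda>t. (u k t - ubar t)^2) \<le> 2 * C * e k"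
        unfolding e_def by (rule L2M_bdd_diff[OF L2u L2b Cb Cbb]) (use iu ib in auto)
      then show "norm (integral\<^sup>L (NN T) (\<lambda>t. (u k t - ubar t)^2)) \<le> 2 * C * e k" by simp
    qed
  qed
  have Dg: "(\<lambda>k. integral\<^sup>L (NN T) (\<lambda>t. (g k t - gb t)^2)) \<longlonglongrightarrow> 0"
  proof (rule Lim_null_comparison)
    have "(\<lambda>k. L^2 * integral\<^sup>L (NN T) (\<lambda>t. (u k t - ubar t)^2)) \<longlonglongrightarrow> L^2 * 0" by (intro tendsto_intros Du)
    then show "(\<lambda>k. L^2 * integral\<^sup>L (NN T) (\<lambda>t. (u k t - ubar t)^2)) \<longlonglongrightarrow> 0" by simp
    show "\<forall>\<^sub>F k in sequentially. norm (integral\<^sup>L (NN T) (\<lambda>t. (g k t - gb t)^2)) \<le> L^2 * integral\<^sup>L (NN T) (\<lambda>t. (u k t - ubar t)^2)"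
    proof (rule always_eventually, rule allI)
      fix k
      define A where "A = integral\<^sup>L (NN T) (\<lambda>t. (g k t - gb t)^2)"
      define B where "B = integral\<^sup>L (NN T) (\<lambda>t. (u k t - ubar t)^2)"
      have A0: "A \<ge> 0" and B0: "B \<ge> 0" unfolding A_def B_def by simp_all
      have "sqrt A \<le> L * sqrt B"
        using Lip[of "u k" ubar] L2u[of k] L2b unfolding A_def B_def g_def gb_def nrmL2_def n2_eq L2_iff by simp
      also have "\<dots> \<le> \<bar>L\<bar> * sqrt B" using B0 by (intro mult_right_mono) auto
      finally have "(sqrt A)^2 \<le> (\<bar>L\<bar> * sqrt B)^2" using A0 by (intro power_mono) auto
      then have "A \<le> L^2 * B" using A0 B0 by (simp add: power_mult_distrib)
      then show "norm A \<le> L^2 * B" using A0 by simp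
    qed
  qed
  have Ds: "(\<lambda>k. integral\<^sup>L (NN T) (\<lambda>t. (u (Suc k) t - u k t)^2)) \<longlonglongrightarrow> 0"
  proof (rule Lim_null_comparison)
    have "(\<lambda>k. 2 * C * (e (Suc k) + e k)) \<longlonglongrightarrow> 2 * C * (0 + 0)"
      by (intro tendsto_intros e0 LIMSEQ_Suc)
    then show "(\<lambda>k. 2 * C * (e (Suc k) + e k)) \<longlonglongrightarrow> 0" by simp
    show "\<forall>\<^sub>F k in sequentially. norm (integral\<^sup>L (NN T) (\<lambda>t. (u (Suc k) t - u k t)^2)) \<le> 2 * C * (e (Suc k) + e k)"
    proof (rule always_eventually, rule allI)
      fix k
      have "integral\<^sup>L (NN T) (\<lambda>t. (u (Suc k) t - u k t)^2) \<le> 2 * C * integral\<^sup>L (NN T) (\<lambda>t. \<bar>u (Suc k) t - u k t\<bar>)"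
        by (rule L2M_bdd_diff[OF L2u L2u Cb Cb]) (use iu in auto)
      also have "integral\<^sup>L (NN T) (\<lambda>t. \<bar>u (Suc k) t - u k t\<bar>) \<le> integral\<^sup>L (NN T) (\<lambda>t. \<bar>u (Suc k) t - ubar t\<bar> + \<bar>u k t - ubar t\<bar>)"
        by (rule integral_mono) (use iu ib in auto)
      also have "\<dots> = e (Suc k) + e k"
      proof -
        have ia: "integrable (NN T) (\<lambda>t. \<bar>u j t - ubar t\<bar>)" for j using iu ib by auto
        show ?thesis unfolding e_def by (rule Bochner_Integration.integral_add[OF ia ia])
      qed
      finally have "integral\<^sup>L (NN T) (\<lambda>t. (u (Suc k) t - u k t)^2) \<le> 2 * C * (e (Suc k) + e k)"
        using C0 by (simp add: mult_left_mono)
      then show "norm (integral\<^sup>L (NN T) (\<lambda>t. (u (Suc k) t - u k t)^2)) \<le> 2 * C * (e (Suc k) + e k)" by simp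
    qed
  qed
  show ?thesis
  proof (intro conjI ballI)
    show "ubar \<in> Uad T V" by fact
    fix v assume vU: "v \<in> Uad T V"
    show "ereal (lin_model T F gradF ubar taubar ubar) + ereal \<beta> * TV T ubar
            \<le> ereal (lin_model T F gradF ubar taubar v) + ereal \<beta> * TV T v"
    proof (cases "TV T v = \<infinity>")
      case True
      then show ?thesis using b0 by simp
    next
      case False
      define tvv where "tvv = real_of_ereal (TV T v)"
      have tvv: "TV T v = ereal tvv" unfolding tvv_def using TV_real(1)[OF T0, of v] False by simp
      have L2v: "L2M (NN T) v" by (rule Uad_L2M[OF vU fV])
      define P1 where "P1 k = integral\<^sup>L (NN T) (\<lambda>t. g k t * (v t - u k t))" for k
      define P2 where "P2 k = integral\<^sup>L (NN T) (\<lambda>t. g k t * (u (Suc k) t - u k t))" for k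
      define P3 where "P3 k = integral\<^sup>L (NN T) (\<lambda>t. (v t - u k t) * (v t - u k t))" for k
      define Q1 where "Q1 = integral\<^sup>L (NN T) (\<lambda>t. gb t * (v t - ubar t))"
      define Q3 where "Q3 = integral\<^sup>L (NN T) (\<lambda>t. (v t - ubar t) * (v t - ubar t))"
      define R where "R k = P1 k - P2 k + \<tau> k / 2 * P3 k + \<beta> * tvv" for k
      have Rk: "\<beta> * tv (Suc k) \<le> R k" for k
      proof -
        have "u (Suc k) \<in> Uad T V \<and>
          lin_model T F gradF (u k) (\<tau> k) (u (Suc k)) + \<beta> * tv (Suc k) \<le> lin_model T F gradF (u k) (\<tau> k) v + \<beta> * tvv"
          by (rule ineq_real[OF minq vU tvv tvk]) (simp add: L2_iff L2v)
        then have "F (u k) + P2 k + \<tau> k / 2 * integral\<^sup>L (NN T) (\<lambda>t. (u (Suc k) t - u k t) * (u (Suc k) t - u k t)) + \<beta> * tv (Suc k)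
             \<le> F (u k) + P1 k + \<tau> k / 2 * P3 k + \<beta> * tvv"
          unfolding lin_model_def nrm2L2_def ip_eq P1_def P2_def P3_def g_def by simp
        moreover have "0 \<le> \<tau> k / 2 * integral\<^sup>L (NN T) (\<lambda>t. (u (Suc k) t - u k t) * (u (Suc k) t - u k t))"
          using tpos[of k] by (intro mult_nonneg_nonneg) auto
        ultimately show ?thesis unfolding R_def by linarith
      qed
      have lP1: "P1 \<longlonglongrightarrow> Q1" unfolding P1_def Q1_def
      proof (rule L2M_ip_cont[OF L2g L2gb _ _ Dg])
        show "L2M (NN T) (\<lambda>t. v t - u k t)" for k by (rule L2M_diff[OF L2v L2u])
        show "L2M (NN T) (\<lambda>t. v t - ubar t)" by (rule L2M_diff[OF L2v L2b])
        have "(\<lambda>t. (v t - u k t - (v t - ubar t))^2) = (\<lambda>t. (u k t - ubar t)^2)" for k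
          by (auto simp: power2_eq_square algebra_simps)
        then show "(\<lambda>k. integral\<^sup>L (NN T) (\<lambda>t. (v t - u k t - (v t - ubar t))^2)) \<longlonglongrightarrow> 0"
          using Du by simp
      qed
      have lP2: "P2 \<longlonglongrightarrow> 0"
      proof -
        have "P2 \<longlonglongrightarrow> integral\<^sup>L (NN T) (\<lambda>t. gb t * 0)" unfolding P2_def
        proof (rule L2M_ip_cont[OF L2g L2gb _ _ Dg])
          show "L2M (NN T) (\<lambda>t. u (Suc k) t - u k t)" for k by (rule L2M_diff[OF L2u L2u])
          show "L2M (NN T) (\<lambda>t. 0)" unfolding L2M_def by simp
          show "(\<lambda>k. integral\<^sup>L (NN T) (\<lambda>t. (u (Suc k) t - u k t - 0)^2)) \<longlonglongrightarrow> 0"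
            using Ds by simp
        qed
        then show ?thesis by simp
      qed
      have lP3: "P3 \<longlonglongrightarrow> Q3" unfolding P3_def Q3_def
      proof (rule L2M_ip_cont)
        show "L2M (NN T) (\<lambda>t. v t - u k t)" for k by (rule L2M_diff[OF L2v L2u])
        then show "L2M (NN T) (\<lambda>t. v t - u k t)" for k .
        show "L2M (NN T) (\<lambda>t. v t - ubar t)" by (rule L2M_diff[OF L2v L2b])
        then show "L2M (NN T) (\<lambda>t. v t - ubar t)" .
        have "(\<lambda>t. (v t - u k t - (v t - ubar t))^2) = (\<lambda>t. (u k t - ubar t)^2)" for k
          by (auto simp: power2_eq_square algebra_simps)
        then show "(\<lambda>k. integral\<^sup>L (NN T) (\<lambda>t. (v t - u k t - (v t - ubar t))^2)) \<longlonglongrightarrow> 0"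
          using Du by simp
        then show "(\<lambda>k. integral\<^sup>L (NN T) (\<lambda>t. (v t - u k t - (v t - ubar t))^2)) \<longlonglongrightarrow> 0" .
      qed
      define X where "X = Q1 - 0 + taubar / 2 * Q3 + \<beta> * tvv"
      have lR: "(\<lambda>j. R (r j)) \<longlonglongrightarrow> X"
      proof -
        have a: "(\<lambda>j. P1 (r j)) \<longlonglongrightarrow> Q1" using LIMSEQ_subseq_LIMSEQ[OF lP1 r(1)] by (simp add: o_def)
        have b: "(\<lambda>j. P2 (r j)) \<longlonglongrightarrow> 0" using LIMSEQ_subseq_LIMSEQ[OF lP2 r(1)] by (simp add: o_def)
        have c: "(\<lambda>j. P3 (r j)) \<longlonglongrightarrow> Q3" using LIMSEQ_subseq_LIMSEQ[OF lP3 r(1)] by (simp add: o_def)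
        have d: "(\<lambda>j. \<tau> (r j)) \<longlonglongrightarrow> taubar" using r(2) by (simp add: o_def)
        show ?thesis unfolding R_def X_def
          by (intro tendsto_intros a b c d) simp
      qed
      have phi: "integral\<^sup>L (NN T) (\<lambda>t. ubar t * deriv \<phi> t) \<le> X / \<beta>"
        if \<phi>: "\<phi> \<in> Cc1 T" "\<forall>t. \<bar>\<phi> t\<bar> \<le> 1" for \<phi>
      proof -
        have I: "(\<lambda>k. integral\<^sup>L (NN T) (\<lambda>t. u (Suc k) t * deriv \<phi> t)) \<longlonglongrightarrow> integral\<^sup>L (NN T) (\<lambda>t. ubar t * deriv \<phi> t)"
          by (rule Cc1_conv[OF \<phi>(1) iu ib]) (use LIMSEQ_Suc[OF e0] e_def in simp)
        have I': "(\<lambda>j. \<beta> * integral\<^sup>L (NN T) (\<lambda>t. u (Suc (r j)) t * deriv \<phi> t)) \<longlonglongrightarrow> \<beta> * integral\<^sup>L (NN T) (\<lambda>t. ubar t * deriv \<phi> t)"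
          using tendsto_mult[OF tendsto_const LIMSEQ_subseq_LIMSEQ[OF I r(1)]] by (simp add: o_def)
        have le: "\<beta> * integral\<^sup>L (NN T) (\<lambda>t. u (Suc (r j)) t * deriv \<phi> t) \<le> R (r j)" for j
        proof -
          have "ereal (integral\<^sup>L (NN T) (\<lambda>t. u (Suc (r j)) t * deriv \<phi> t)) \<le> TV T (u (Suc (r j)))"
            using TV_ge[OF \<phi>] unfolding sint_eq .
          then have "integral\<^sup>L (NN T) (\<lambda>t. u (Suc (r j)) t * deriv \<phi> t) \<le> tv (Suc (r j))" using tvk by simp
          then have "\<beta> * integral\<^sup>L (NN T) (\<lambda>t. u (Suc (r j)) t * deriv \<phi> t) \<le> \<beta> * tv (Suc (r j))"
            using b0 by simp
          then show ?thesis using Rk[of "r j"] by linarith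
        qed
        have "\<beta> * integral\<^sup>L (NN T) (\<lambda>t. ubar t * deriv \<phi> t) \<le> X"
          by (rule LIMSEQ_le[OF I' lR]) (use le in auto)
        then show ?thesis using b0 by (simp add: field_simps)
      qed
      have "TV T ubar \<le> ereal (X / \<beta>)"
        by (rule TV_le) (use phi in \<open>simp add: sint_eq\<close>)
      then have "tvb \<le> X / \<beta>" using tvbar by simp
      then have tb: "\<beta> * tvb \<le> X" using b0 by (simp add: field_simps)
      have lm1: "lin_model T F gradF ubar taubar ubar = F ubar"
        unfolding lin_model_def nrm2L2_def ip_eq by simp
      have lm2: "lin_model T F gradF ubar taubar v = F ubar + Q1 + taubar / 2 * Q3"
        unfolding lin_model_def nrm2L2_def ip_eq Q1_def Q3_def gb_def by simp
      show ?thesis unfolding lm1 lm2 tvbar tvv using tb unfolding X_def by simp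
    qed
  qed
qed


end
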